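(* Let $P$ be the uniform probability measure on $[0,1]$, $Q$ a probability measure on $[0,1]$ with unimodal density $r = dQ/dP$, maximiser $x^*$ and $r_{max} = \sup r<\infty$. Let $B_1, B_2,\dots$ be the bounds produced by AS* and $Z_n = P(B_n)$. Then for every $\gamma\in[0,1]$ and $n \ge 1$, $$\mathbb{P}(Z_n \ge w(\gamma)) \le \frac{1}{w(\gamma)}\left(\frac{3}{4}\right)^{n-1}.$$
   Context: Unimodal: $r$ non-decreasing on $[0,x^*]$, non-increasing on $[x^*,1]$, $r(x^* ) = r_{max}$. $S(\gamma) = \{x\in[0,1] : r(x)\ge\gamma r_{max}\}$ and $w(\gamma) = \inf\{\delta\in[0,1] : \exists z\in[0,1],\ S(\gamma)\subseteq[z,z+\delta]\}$. $\mathrm{TG}(\mu,\kappa)$ is the unit-scale Gumbel with location $\mu$ truncated to $(-\infty,\kappa]$ (density $\propto \exp(-(g-\mu)-e^{-(g-\mu)})$ on $g\le\kappa$). AS*: $B_1=[0,1]$, $G_0=+\infty$; for every $n\ge1$ draw $G_n\sim\mathrm{TG}(\log P(B_n),G_{n-1})$ and independently $X_n\sim P(\cdot\cap B_n)/P(B_n)$; set $L_n=\max_{k\le n}(\log r(X_k)+G_k)$, $U_n=\log r_{max}+G_n$, and $B_{n+1}=[\max(\{0\}\cup\{X_k:k\le n,X_k\le x^*\}),\ \min(\{1\}\cup\{X_k:k\le n,X_k\ge x^*\})]$. These sequences are defined for all $n$; the algorithm's number of steps is $T=\min\{n\ge1: L_n\ge U_n\}$. *)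

theory Defs
  imports "HOL-Probability.Probability"
begin

definition unifP :: "real measure" where
  "unifP = uniform_measure lborel {0..1}"

definition Slev :: "(real \<Rightarrow> real) \<Rightarrow> real \<Rightarrow> real \<Rightarrow> real set" where
  "Slev r rmax \<gamma> = {x \<in> {0..1}. r x \<ge> \<gamma> * rmax}"

definition wid :: "(real \<Rightarrow> real) \<Rightarrow> real \<Rightarrow> real \<Rightarrow> real" where
  "wid r rmax \<gamma> = Inf {\<delta> \<in> {0..1}. \<exists>z\<in>{0..1}. Slev r rmax \<gamma> \<subseteq> {z..z+\<delta>}}"

definition gumbel_dens :: "real \<Rightarrow> real \<Rightarrow> real" where
  "gumbel_dens \<mu> g = exp (- (g - \<mu>) - exp (- (g - \<mu>)))"

definition TG :: "real \<Rightarrow> ereal \<Rightarrow> real measure" where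
  "TG \<mu> \<kappa> = density lborel (\<lambda>g.
      ennreal (gumbel_dens \<mu> g) * indicator {h. ereal h \<le> \<kappa>} g /
      (\<integral>\<^sup>+ h. ennreal (gumbel_dens \<mu> h) * indicator {h. ereal h \<le> \<kappa>} h \<partial>lborel))"

text \<open>X_n ~ P(. \<inter> B_n)/P(B_n), i.e. uniform on B_n=[a,b]
  (degenerate case a = b, a null event, handled by a point mass).\<close>
definition unifB :: "real \<Rightarrow> real \<Rightarrow> real measure" where
  "unifB a b = (if a < b then uniform_measure lborel {a..b} else return borel a)"

text \<open>One step of AS*: state (a, b, g) encodes B_n = [a,b] and G_{n-1} = g.
  Draw X_n and G_n independently, and produce (B_{n+1}, G_n).\<close>
definition AS_step :: "real \<Rightarrow> real \<times> real \<times> ereal \<Rightarrow> (real \<times> real \<times> ereal) measure" where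
  "AS_step xs s = (case s of (a, b, g) \<Rightarrow>
     distr (unifB a b \<Otimes>\<^sub>M TG (ln (measure unifP {a..b})) g) borel
       (\<lambda>(x, g'). (if x \<le> xs then max a x else a, if x \<ge> xs then min b x else b, ereal g')))"

text \<open>Law of (B_n, G_{n-1}) for n \<ge> 1 (index 0 is unused and set equal to index 1):
  B_1 = [0,1], G_0 = +\<infinity>.\<close>
fun AS_law :: "real \<Rightarrow> nat \<Rightarrow> (real \<times> real \<times> ereal) measure" where
  "AS_law xs 0 = return borel (0, 1, PInfty)"
| "AS_law xs (Suc 0) = return borel (0, 1, PInfty)"
| "AS_law xs (Suc (Suc n)) = AS_law xs (Suc n) \<bind> AS_step xs"

end

theory Submission
  imports Defs
begin

abbreviation "SM \<equiv> (borel \<Otimes>\<^sub>M (borel \<Otimes>\<^sub>M borel) :: (real\<times>real\<times>ereal) measure)"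

lemma B3: "(borel :: (real\<times>real\<times>ereal) measure) = SM"
  by (simp add: borel_prod)

lemma unifP_Icc: "measure unifP {a..b} = max 0 (min b 1 - max a 0)"
proof -
  have "{a..b} \<inter> {0..1::real} = {max a 0..min b 1}" by auto
  then have "emeasure unifP {a..b} = emeasure lborel {max a 0..min b 1} / emeasure lborel {0..1::real}"
    unfolding unifP_def by (subst emeasure_uniform_measure) (auto simp: Int_commute)
  also have "\<dots> = ennreal (max 0 (min b 1 - max a 0))"
    by (cases "max a 0 \<le> min b 1") (auto simp: ennreal_neg divide_ennreal_def)
  finally have "emeasure unifP {a..b} = ennreal (max 0 (min b 1 - max a 0))" .
  moreover have "enn2real (ennreal (max 0 (min b 1 - max a 0))) = max 0 (min b 1 - max a 0)"
    by (rule enn2real_ennreal) simp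
  ultimately show ?thesis unfolding measure_def by simp
qed

lemma sets_unifB[simp]: "sets (unifB a b) = sets borel"
  by (simp add: unifB_def)

lemma emeasure_unifB:
  assumes "A \<in> sets borel"
  shows "emeasure (unifB a b) A = (if a < b then (\<integral>\<^sup>+x. indicator A x * indicator {a..b} x \<partial>lborel) / ennreal (b - a) else indicator A a)"
proof -
  have "\<And>x. indicator A x * indicator {a..b} x = (indicator (A \<inter> {a..b}) x :: ennreal)"
    by (simp split: split_indicator)
  then have "(\<integral>\<^sup>+x. indicator A x * indicator {a..b} x \<partial>lborel) = emeasure lborel (A \<inter> {a..b})"
    using assms by simp
  then show ?thesis
  using assms by (auto simp: unifB_def Int_commute)
qed

lemma prob_unifB: "prob_space (unifB a b)"
  by (auto simp: unifB_def intro!: prob_space_uniform_measure prob_space_return)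

lemma meas_unifB: "(\<lambda>s. unifB (fst s) (fst (snd s))) \<in> SM \<rightarrow>\<^sub>M subprob_algebra borel"
proof (rule measurable_subprob_algebra)
  fix s show "subprob_space (unifB (fst s) (fst (snd s)))"
    using prob_unifB prob_space_imp_subprob_space by blast
next
  fix s show "sets (unifB (fst s) (fst (snd s))) = sets borel" by simp
next
  fix A :: "real set" assume A[measurable]: "A \<in> sets borel"
  have m1: "(\<lambda>s::real\<times>real\<times>ereal. \<integral>\<^sup>+x. indicator A x * indicator {fst s..fst (snd s)} x \<partial>lborel) \<in> borel_measurable SM"
    unfolding indicator_def atLeastAtMost_iff by measurable
  have m2: "(\<lambda>s::real\<times>real\<times>ereal. ennreal (fst (snd s) - fst s)) \<in> borel_measurable SM"
    by measurable
  have m3: "(\<lambda>s::real\<times>real\<times>ereal. indicator A (fst s) :: ennreal) \<in> borel_measurable SM"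
    by measurable
  have m4: "{s \<in> space SM. fst s < fst (snd s)} \<in> sets SM"
    by measurable
  show "(\<lambda>s. emeasure (unifB (fst s) (fst (snd s))) A) \<in> borel_measurable SM"
    unfolding emeasure_unifB[OF A]
    by (intro measurable_If borel_measurable_divide_ennreal m1 m2 m3 m4)
qed

lemma meas_gumbel[measurable]: "(\<lambda>(m, h). gumbel_dens m h) \<in> borel_measurable (borel \<Otimes>\<^sub>M borel)"
  unfolding gumbel_dens_def by measurable

lemma meas_density_kernel:
  fixes F :: "'s \<Rightarrow> real \<Rightarrow> ennreal"
  assumes F[measurable]: "case_prod F \<in> borel_measurable (N \<Otimes>\<^sub>M lborel)"
  and sub: "\<And>s. s \<in> space N \<Longrightarrow> subprob_space (density lborel (F s))"
  shows "(\<lambda>s. density lborel (F s)) \<in> N \<rightarrow>\<^sub>M subprob_algebra borel"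
proof (rule measurable_subprob_algebra)
  fix s assume "s \<in> space N" then show "subprob_space (density lborel (F s))" by (rule sub)
next
  fix s show "sets (density lborel (F s)) = sets borel" by simp
next
  fix A :: "real set" assume A[measurable]: "A \<in> sets borel"
  have "(\<lambda>s. \<integral>\<^sup>+x. F s x * indicator A x \<partial>lborel) \<in> borel_measurable N"
    by (rule lborel.borel_measurable_nn_integral) measurable
  moreover have "s \<in> space N \<Longrightarrow> emeasure (density lborel (F s)) A = (\<integral>\<^sup>+x. F s x * indicator A x \<partial>lborel)" for s
    by (rule emeasure_density) (auto intro: measurable_Pair2[OF F])
  ultimately show "(\<lambda>s. emeasure (density lborel (F s)) A) \<in> borel_measurable N"
    by (simp cong: measurable_cong)
qed

lemma ennreal_div_self_le: "(c::ennreal) / c \<le> 1"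
proof (cases "c = 0 \<or> c = top")
  case True then show ?thesis by (auto simp: divide_ennreal_def)
next
  case False then show ?thesis by (simp add: ennreal_divide_self top.not_eq_extremum)
qed

lemma subprob_TG: "subprob_space (TG m k)"
proof -
  let ?g = "\<lambda>h. ennreal (gumbel_dens m h) * indicator {h. ereal h \<le> k} h"
  have [measurable]: "?g \<in> borel_measurable borel"
    unfolding gumbel_dens_def indicator_def by measurable
  have "emeasure (TG m k) (space (TG m k)) = (\<integral>\<^sup>+h. ?g h / integral\<^sup>N lborel ?g \<partial>lborel)"
    unfolding TG_def by (subst emeasure_density) auto
  also have "\<dots> = integral\<^sup>N lborel ?g / integral\<^sup>N lborel ?g"
    by (rule nn_integral_divide) simp
  also have "\<dots> \<le> 1" by (rule ennreal_div_self_le)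
  finally show ?thesis by (intro subprob_spaceI) (auto simp: TG_def)
qed


lemma TG_alt: "TG m k = density lborel (\<lambda>h. ennreal (gumbel_dens m h) * indicator {h. ereal h \<le> k} h /
      (\<integral>\<^sup>+ h. ennreal (gumbel_dens m h) * indicator {h. ereal h \<le> k} h \<partial>lborel))"
  by (simp add: TG_def)

lemma meas_TG: "(\<lambda>s. TG (ln (measure unifP {fst s..fst (snd s)})) (snd (snd s))) \<in> SM \<rightarrow>\<^sub>M subprob_algebra borel"
proof -
  define mu where "mu s = ln (max 0 (min (fst (snd s)) 1 - max (fst s) 0))" for s :: "real\<times>real\<times>ereal"
  have mu[measurable]: "mu \<in> borel_measurable SM" unfolding mu_def by measurable
  define g where "g s h = ennreal (gumbel_dens (mu s) h) * indicator {h. ereal h \<le> snd (snd s)} h" for s h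
  have g[measurable]: "case_prod g \<in> borel_measurable (SM \<Otimes>\<^sub>M lborel)"
    unfolding g_def gumbel_dens_def indicator_def mem_Collect_eq by measurable
  define c where "c s = (\<integral>\<^sup>+h. g s h \<partial>lborel)" for s
  have c[measurable]: "c \<in> borel_measurable SM"
    unfolding c_def by (rule lborel.borel_measurable_nn_integral) (rule g)
  have eq: "TG (ln (measure unifP {fst s..fst (snd s)})) (snd (snd s)) = density lborel (\<lambda>h. g s h / c s)" for s
    unfolding TG_alt unifP_Icc g_def c_def mu_def ..
  have "(\<lambda>s. density lborel (\<lambda>h. g s h / c s)) \<in> SM \<rightarrow>\<^sub>M subprob_algebra borel"
  proof (rule meas_density_kernel)
    show "(\<lambda>(s, h). g s h / c s) \<in> borel_measurable (SM \<Otimes>\<^sub>M lborel)"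
      using g by measurable
    fix s show "subprob_space (density lborel (\<lambda>h. g s h / c s))"
      using subprob_TG eq by metis
  qed
  then show ?thesis unfolding eq .
qed

lemma AS_step_alt: "AS_step xs s = distr (unifB (fst s) (fst (snd s)) \<Otimes>\<^sub>M TG (ln (measure unifP {fst s..fst (snd s)})) (snd (snd s))) borel
       (\<lambda>(x, g'). (if x \<le> xs then max (fst s) x else fst s, if x \<ge> xs then min (fst (snd s)) x else fst (snd s), ereal g'))"
proof -
  obtain a b c where s: "s = (a, b, c)" by (cases s)
  show ?thesis unfolding s AS_step_def fst_conv snd_conv prod.case ..
qed

lemma meas_AS_step: "AS_step xs \<in> borel \<rightarrow>\<^sub>M subprob_algebra borel"
proof -
  have "(\<lambda>s. unifB (fst s) (fst (snd s)) \<Otimes>\<^sub>M TG (ln (measure unifP {fst s..fst (snd s)})) (snd (snd s)))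
     \<in> SM \<rightarrow>\<^sub>M subprob_algebra (borel \<Otimes>\<^sub>M borel)"
    by (rule measurable_pair_measure[OF meas_unifB meas_TG])
  moreover have "(\<lambda>(s, y). (\<lambda>(x, g'). (if x \<le> xs then max (fst s) x else fst s, if x \<ge> xs then min (fst (snd s)) x else fst (snd s), ereal g')) y)
     \<in> SM \<Otimes>\<^sub>M (borel \<Otimes>\<^sub>M borel) \<rightarrow>\<^sub>M SM"
    by measurable
  ultimately have "(\<lambda>s. distr (unifB (fst s) (fst (snd s)) \<Otimes>\<^sub>M TG (ln (measure unifP {fst s..fst (snd s)})) (snd (snd s))) SM
       (\<lambda>(x, g'). (if x \<le> xs then max (fst s) x else fst s, if x \<ge> xs then min (fst (snd s)) x else fst (snd s), ereal g'))) \<in> SM \<rightarrow>\<^sub>M subprob_algebra SM"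
    by (rule measurable_distr2[rotated])
  then show ?thesis unfolding AS_step_alt[abs_def] B3 .
qed


definition inv_st :: "real \<Rightarrow> real\<times>real\<times>ereal \<Rightarrow> bool" where
  "inv_st xs s \<longleftrightarrow> 0 \<le> fst s \<and> fst s \<le> xs \<and> xs \<le> fst (snd s) \<and> fst (snd s) \<le> 1"

definition Phi :: "real \<Rightarrow> real\<times>real\<times>ereal \<Rightarrow> ennreal" where
  "Phi xs s = (if inv_st xs s then ennreal (fst (snd s) - fst s) else top)"

lemma Phi_meas[measurable]: "Phi xs \<in> borel_measurable borel"
  unfolding B3 Phi_def inv_st_def by measurable

lemma int_bound:
  fixes a b xs :: real
  assumes "a \<le> xs" "xs \<le> b" "a < b"
  shows "(\<integral>\<^sup>+x. ennreal ((if xs \<le> x then min b x else b) - (if x \<le> xs then max a x else a)) \<partial>unifB a b)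
         \<le> ennreal (3/4 * (b - a))"
proof -
  define psi where "psi x = ennreal ((if xs \<le> x then min b x else b) - (if x \<le> xs then max a x else a))" for x
  have psi_m[measurable]: "psi \<in> borel_measurable borel" unfolding psi_def by measurable
  define T1 where "T1 = (b * xs - xs^2/2) - (b * a - a^2/2)"
  define T2 where "T2 = (b^2/2 - a * b) - (xs^2/2 - a * xs)"
  have i1: "(\<integral>\<^sup>+x. ennreal (b - x) * indicator {a..xs} x \<partial>lborel) = ennreal T1"
    unfolding T1_def
    by (rule nn_integral_FTC_Icc[where F="\<lambda>x. b * x - x^2/2"])
       (use assms in \<open>auto intro!: derivative_eq_intros\<close>)
  have i2: "(\<integral>\<^sup>+x. ennreal (x - a) * indicator {xs..b} x \<partial>lborel) = ennreal T2"
    unfolding T2_def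
    by (rule nn_integral_FTC_Icc[where F="\<lambda>x. x^2/2 - a * x"])
       (use assms in \<open>auto intro!: derivative_eq_intros simp: power2_eq_square\<close>)
  have "T1 = (xs - a) * ((b - xs) + (xs - a)/2)"
    unfolding T1_def by (simp add: power2_eq_square field_simps)
  then have T1: "0 \<le> T1" using assms by simp
  have "T2 = (b - xs) * ((xs - a) + (b - xs)/2)"
    unfolding T2_def by (simp add: power2_eq_square field_simps)
  then have T2: "0 \<le> T2" using assms by simp
  have key: "T1 + T2 \<le> 3/4 * (b - a)^2"
  proof -
    have "T1 + T2 = 3/4 * (b - a)^2 - ((xs - a) - (b - xs))^2 / 4"
      unfolding T1_def T2_def by (simp add: power2_eq_square field_simps)
    then show ?thesis by simp
  qed
  have "(\<integral>\<^sup>+x. psi x \<partial>unifB a b) = (\<integral>\<^sup>+x. psi x * indicator {a..b} x \<partial>lborel) / emeasure lborel {a..b}"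
    unfolding unifB_def using assms by (simp add: nn_integral_uniform_measure)
  also have "\<dots> \<le> (\<integral>\<^sup>+x. ennreal (b - x) * indicator {a..xs} x + ennreal (x - a) * indicator {xs..b} x \<partial>lborel) / emeasure lborel {a..b}"
  proof (intro divide_right_mono_ennreal nn_integral_mono)
    fix x
    show "psi x * indicator {a..b} x \<le> ennreal (b - x) * indicator {a..xs} x + ennreal (x - a) * indicator {xs..b} x"
      unfolding psi_def using assms by (cases "x < xs"; cases "x = xs") (auto split: split_indicator)
  qed
  also have "\<dots> = ennreal (T1 + T2) / ennreal (b - a)"
    using assms T1 T2 by (simp add: nn_integral_add i1 i2 ennreal_plus)
  also have "\<dots> = ennreal ((T1 + T2) / (b - a))"
    using assms T1 T2 by (simp add: divide_ennreal[symmetric] ennreal_plus)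
  also have "\<dots> \<le> ennreal (3/4 * (b - a))"
  proof (rule ennreal_leI)
    have "(T1 + T2) / (b - a) \<le> 3/4 * (b - a)^2 / (b - a)"
      using key assms by (intro divide_right_mono) auto
    also have "\<dots> = 3/4 * (b - a)" using assms by (simp add: power2_eq_square field_simps)
    finally show "(T1 + T2) / (b - a) \<le> 3/4 * (b - a)" .
  qed
  finally show ?thesis unfolding psi_def .
qed

lemma step_bound:
  assumes xs: "0 \<le> xs" "xs \<le> 1"
  shows "(\<integral>\<^sup>+y. Phi xs y \<partial>AS_step xs s) \<le> ennreal (3/4) * Phi xs s"
proof (cases "inv_st xs s")
  case False
  then show ?thesis by (simp add: Phi_def ennreal_mult_top)
next
  case True
  obtain a b c where s: "s = (a, b, c)" by (cases s)
  have inv: "0 \<le> a" "a \<le> xs" "xs \<le> b" "b \<le> 1" using True by (auto simp: s inv_st_def)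
  define U where "U = unifB a b"
  define T where "T = TG (ln (measure unifP {a..b})) c"
  define F where "F = (\<lambda>(x::real, g'::real). (if x \<le> xs then max a x else a, if x \<ge> xs then min b x else b, ereal g'))"
  define psi where "psi x = ennreal ((if xs \<le> x then min b x else b) - (if x \<le> xs then max a x else a))" for x
  have psi_m[measurable]: "psi \<in> borel_measurable borel" unfolding psi_def by measurable
  interpret T: subprob_space T unfolding T_def by (rule subprob_TG)
  have setsT: "sets T = sets borel" by (simp add: T_def TG_def)
  have sets_UT: "sets (U \<Otimes>\<^sub>M T) = sets (borel \<Otimes>\<^sub>M borel)"
    by (rule sets_pair_measure_cong) (auto simp: U_def setsT)
  have "F \<in> borel \<Otimes>\<^sub>M borel \<rightarrow>\<^sub>M SM" unfolding F_def by measurable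
  then have Fm: "F \<in> U \<Otimes>\<^sub>M T \<rightarrow>\<^sub>M borel"
    unfolding B3 by (simp add: measurable_cong_sets[OF sets_UT refl])
  have eq: "AS_step xs s = distr (U \<Otimes>\<^sub>M T) borel F"
    unfolding s AS_step_def U_def T_def F_def by simp
  have "(\<integral>\<^sup>+y. Phi xs y \<partial>AS_step xs s) = (\<integral>\<^sup>+z. Phi xs (F z) \<partial>(U \<Otimes>\<^sub>M T))"
    unfolding eq by (rule nn_integral_distr[OF Fm]) simp
  also have "\<dots> = (\<integral>\<^sup>+z. psi (fst z) \<partial>(U \<Otimes>\<^sub>M T))"
  proof (rule nn_integral_cong)
    fix z :: "real \<times> real" obtain x g where z: "z = (x, g)" by (cases z)
    show "Phi xs (F z) = psi (fst z)"
      using inv unfolding z F_def Phi_def inv_st_def psi_def by auto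
  qed
  also have "\<dots> = (\<integral>\<^sup>+x. \<integral>\<^sup>+g. psi x \<partial>T \<partial>U)"
  proof -
    have "(\<lambda>z. psi (fst z)) \<in> borel_measurable (U \<Otimes>\<^sub>M T)"
      by (simp add: measurable_cong_sets[OF sets_UT refl])
    from T.nn_integral_fst[OF this] show ?thesis by simp
  qed
  also have "\<dots> \<le> (\<integral>\<^sup>+x. psi x \<partial>U)"
  proof (rule nn_integral_mono)
    fix x
    have "(\<integral>\<^sup>+g. psi x \<partial>T) = psi x * emeasure T (space T)" by simp
    also have "\<dots> \<le> psi x * 1" by (intro mult_left_mono T.emeasure_space_le_1) simp
    finally show "(\<integral>\<^sup>+g. psi x \<partial>T) \<le> psi x" by simp
  qed
  also have "\<dots> \<le> ennreal (3/4) * Phi xs s"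
  proof (cases "a < b")
    case True
    have "(\<integral>\<^sup>+x. psi x \<partial>U) \<le> ennreal (3/4 * (b - a))"
      unfolding U_def psi_def using int_bound[OF inv(2,3) True] .
    also have "\<dots> = ennreal (3/4) * Phi xs s"
      using \<open>inv_st xs s\<close> inv by (simp add: Phi_def s ennreal_mult[symmetric])
    finally show ?thesis .
  next
    case False
    then have ab: "a = xs" "b = xs" using inv by auto
    have "(\<integral>\<^sup>+x. psi x \<partial>U) = psi a"
      unfolding U_def unifB_def using False by (simp add: nn_integral_return)
    also have "\<dots> = 0" unfolding psi_def using ab by simp
    finally show ?thesis by simp
  qed
  finally show ?thesis .
qed


lemma law_props:
  assumes xs: "0 \<le> xs" "xs \<le> 1"
  shows "sets (AS_law xs (Suc m)) = sets borel \<and> (\<integral>\<^sup>+s. Phi xs s \<partial>AS_law xs (Suc m)) \<le> ennreal ((3/4)^m)"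
proof (induction m)
  case 0
  have "(\<integral>\<^sup>+s. Phi xs s \<partial>return borel (0, 1, PInfty)) = Phi xs (0, 1, PInfty)"
    by (rule nn_integral_return) auto
  also have "\<dots> = 1" using xs by (simp add: Phi_def inv_st_def)
  finally show ?case by simp
next
  case (Suc m)
  let ?M = "AS_law xs (Suc m)"
  have sM: "sets ?M = sets borel" using Suc by simp
  have K: "AS_step xs \<in> ?M \<rightarrow>\<^sub>M subprob_algebra borel"
    using meas_AS_step by (simp add: measurable_cong_sets[OF sM refl])
  have spM: "space ?M \<noteq> {}" using sets_eq_imp_space_eq[OF sM] by simp
  have eqM: "AS_law xs (Suc (Suc m)) = ?M \<bind> AS_step xs" by simp
  have "sets (AS_law xs (Suc (Suc m))) = sets borel"
    unfolding eqM by (rule sets_bind_measurable[OF K spM])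
  moreover have "(\<integral>\<^sup>+s. Phi xs s \<partial>AS_law xs (Suc (Suc m))) \<le> ennreal ((3/4)^(Suc m))"
  proof -
    have PhiM: "Phi xs \<in> borel_measurable ?M"
      using Phi_meas by (simp add: measurable_cong_sets[OF sM refl])
    have "(\<integral>\<^sup>+s. Phi xs s \<partial>AS_law xs (Suc (Suc m))) = (\<integral>\<^sup>+s. \<integral>\<^sup>+y. Phi xs y \<partial>AS_step xs s \<partial>?M)"
      unfolding eqM by (rule nn_integral_bind[OF Phi_meas K])
    also have "\<dots> \<le> (\<integral>\<^sup>+s. ennreal (3/4) * Phi xs s \<partial>?M)"
      by (rule nn_integral_mono) (rule step_bound[OF xs])
    also have "\<dots> = ennreal (3/4) * (\<integral>\<^sup>+s. Phi xs s \<partial>?M)"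
      by (rule nn_integral_cmult[OF PhiM])
    also have "\<dots> \<le> ennreal (3/4) * ennreal ((3/4)^m)"
      using Suc by (intro mult_left_mono) auto
    also have "\<dots> = ennreal ((3/4)^(Suc m))"
      by (simp add: ennreal_mult[symmetric])
    finally show ?thesis .
  qed
  ultimately show ?case by blast
qed

theorem mainTheorem4:
  fixes r :: "real \<Rightarrow> real" and Q :: "real measure"
    and xs rmax \<gamma> :: real and n :: nat
  assumes r_meas: "r \<in> borel_measurable borel"
    and r_nonneg: "\<forall>x\<in>{0..1}. 0 \<le> r x"
    and Q_def: "Q = density unifP (\<lambda>x. ennreal (r x))"
    and Q_prob: "prob_space Q"
    and xs_in: "xs \<in> {0..1}"
    and incr: "\<forall>x y. 0 \<le> x \<longrightarrow> x \<le> y \<longrightarrow> y \<le> xs \<longrightarrow> r x \<le> r y"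
    and decr: "\<forall>x y. xs \<le> x \<longrightarrow> x \<le> y \<longrightarrow> y \<le> 1 \<longrightarrow> r y \<le> r x"
    and r_bdd: "bdd_above (r ` {0..1})"
    and rmax_def: "rmax = (SUP x\<in>{0..1}. r x)"
    and r_xs: "r xs = rmax"
    and \<gamma>: "\<gamma> \<in> {0..1}"
    and n: "n \<ge> 1"
  shows "emeasure (AS_law xs n)
           {s. wid r rmax \<gamma> \<le> measure unifP {fst s..fst (snd s)}}
         \<le> ennreal ((3/4) ^ (n - 1)) / ennreal (wid r rmax \<gamma>)"
proof -
  obtain m where nm: "n = Suc m" using n by (cases n) auto
  have xs: "0 \<le> xs" "xs \<le> 1" using xs_in by auto
  define w where "w = wid r rmax \<gamma>"
  define S where "S = {s::real\<times>real\<times>ereal. w \<le> measure unifP {fst s..fst (snd s)}}"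
  let ?M = "AS_law xs (Suc m)"
  have sM: "sets ?M = sets borel" and intM: "(\<integral>\<^sup>+s. Phi xs s \<partial>?M) \<le> ennreal ((3/4)^m)"
    using law_props[OF xs, of m] by auto
  show ?thesis
  proof (cases "w \<le> 0")
    case True
    then have "ennreal w = 0" by (simp add: ennreal_eq_0_iff)
    then have "ennreal ((3/4) ^ (n - 1)) / ennreal w = top"
      by (simp add: divide_ennreal_def ennreal_mult_top)
    then show ?thesis unfolding w_def by simp
  next
    case False
    then have w: "0 < w" by simp
    have "{s \<in> space SM. w \<le> max 0 (min (fst (snd s)) 1 - max (fst s) 0)} \<in> sets SM"
      by measurable
    then have S_sets: "S \<in> sets ?M"
      unfolding sM S_def unifP_Icc B3 by (simp add: space_pair_measure)
    have PhiM: "Phi xs \<in> borel_measurable ?M"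
      using Phi_meas by (simp add: measurable_cong_sets[OF sM refl])
    have "emeasure ?M S = (\<integral>\<^sup>+s. indicator S s \<partial>?M)"
      using S_sets by simp
    also have "\<dots> \<le> (\<integral>\<^sup>+s. Phi xs s * ennreal (1 / w) \<partial>?M)"
    proof (rule nn_integral_mono)
      fix s :: "real\<times>real\<times>ereal"
      show "indicator S s \<le> Phi xs s * ennreal (1 / w)"
      proof (cases "s \<in> S")
        case False then show ?thesis by simp
      next
        case sS: True
        show ?thesis
        proof (cases "inv_st xs s")
          case False then show ?thesis using w by (simp add: Phi_def ennreal_top_mult)
        next
          case True
          then have "measure unifP {fst s..fst (snd s)} = fst (snd s) - fst s"
            unfolding unifP_Icc inv_st_def by auto
          then have le: "w \<le> fst (snd s) - fst s" using sS by (simp add: S_def)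
          have "Phi xs s * ennreal (1 / w) = ennreal ((fst (snd s) - fst s) * (1 / w))"
            using True w le by (simp add: Phi_def ennreal_mult[symmetric])
          also have "\<dots> \<ge> 1" using le w by (simp add: field_simps)
          finally show ?thesis using sS by simp
        qed
      qed
    qed
    also have "\<dots> = (\<integral>\<^sup>+s. Phi xs s \<partial>?M) * ennreal (1 / w)"
      by (rule nn_integral_multc[OF PhiM])
    also have "\<dots> \<le> ennreal ((3/4)^m) * ennreal (1 / w)"
      using intM by (intro mult_right_mono) auto
    also have "\<dots> = ennreal ((3/4)^m) / ennreal w"
      using w by (simp add: divide_ennreal ennreal_mult[symmetric])
    finally show ?thesis unfolding nm S_def w_def by simp
  qed
qed

end
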